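(* Let $k>0$ and fix $\Delta\in\mathbb{N}$. For every integer $n$ with $-\Delta<n<0$ there exists $\gamma_c=\gamma_c(k)\in\mathbb{R}$ such that $\Omega_{n,\gamma_c}=\Omega_{n+\Delta,\gamma_c}$ (the eigenvalues $i\Omega_{n,\gamma}$ and $i\Omega_{n+\Delta,\gamma}$ of $\mathcal H_0(\gamma)$ collide). All such collisions take place away from the origin (i.e. the common value is nonzero), except when $\Delta$ is even and $n=-\Delta/2$, in which case $n+\Delta=-n$ and the eigenvalues $i\Omega_{n,\gamma}$ and $i\Omega_{-n,\gamma}$ collide at the origin.
   Context: For $k>0$, $\gamma\in\mathbb{R}$ and $n\in\mathbb{Z}\setminus\{0\}$, set $\Omega_{n,\gamma}=k^3n(1-n^2)+\frac{3\gamma^2}{kn}$. These are such that $\mathcal H_0(\gamma)e^{inz}=i\Omega_{n,\gamma}e^{inz}$, where $\mathcal H_0(\gamma)=k^3\partial_z+k^3\partial_z^3-\frac{3\gamma^2}{k}\partial_z^{-1}$ on mean-zero $2\pi$-periodic functions (the zero-amplitude case of the linearized Konopelchenko–Dubrovsky operator), so its spectrum is $\{i\Omega_{n,\gamma}:n\in\mathbb{Z}\setminus\{0\}\}$. Two eigenvalues "collide" at $\gamma_c$ if $\Omega_{n,\gamma_c}=\Omega_{m,\gamma_c}$ for $n\ne m$. *)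

theory Defs
  imports Complex_Main
begin

text \<open>Omega k n gamma = k^3 n (1 - n^2) + 3 gamma^2 / (k n), the imaginary part of the
  eigenvalue of H_0(gamma) on e^{inz}.\<close>
definition Omega :: "real \<Rightarrow> int \<Rightarrow> real \<Rightarrow> real" where
  "Omega k n \<gamma> = k ^ 3 * real_of_int n * (1 - (real_of_int n)\<^sup>2) + 3 * \<gamma>\<^sup>2 / (k * real_of_int n)"

end

theory Submission
  imports Defs
begin

lemma key:
  fixes k x y g :: real
  assumes "k > 0" "x \<noteq> 0" "y \<noteq> 0" "x \<noteq> y"
  shows "(k ^ 3 * x * (1 - x\<^sup>2) + 3 * g\<^sup>2 / (k * x) = k ^ 3 * y * (1 - y\<^sup>2) + 3 * g\<^sup>2 / (k * y))
     \<longleftrightarrow> 3 * g\<^sup>2 = k^4 * x * y * (1 - (x\<^sup>2 + x*y + y\<^sup>2))"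
proof -
  have "(k ^ 3 * x * (1 - x\<^sup>2) + 3 * g\<^sup>2 / (k * x) = k ^ 3 * y * (1 - y\<^sup>2) + 3 * g\<^sup>2 / (k * y))
     \<longleftrightarrow> k * (k^4 * x * y * x * (1 - x\<^sup>2) + 3 * g\<^sup>2 * y) = k * (k^4 * x * y * y * (1 - y\<^sup>2) + 3 * g\<^sup>2 * x)"
    using assms by (simp add: field_simps power2_eq_square power3_eq_cube power4_eq_xxxx)
  also have "\<dots> \<longleftrightarrow> k * (x - y) * (k^4 * x * y * (1 - (x\<^sup>2 + x*y + y\<^sup>2)) - 3 * g\<^sup>2) = 0"
    by (auto simp: algebra_simps power2_eq_square power3_eq_cube)
  also have "\<dots> \<longleftrightarrow> 3 * g\<^sup>2 = k^4 * x * y * (1 - (x\<^sup>2 + x*y + y\<^sup>2))"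
    using assms by auto
  finally show ?thesis .
qed

theorem lemma3p1:
  fixes k :: real and \<Delta> :: nat and n :: int
  assumes "k > 0" and "- int \<Delta> < n" and "n < 0"
  shows "(\<exists>\<gamma>c :: real. Omega k n \<gamma>c = Omega k (n + int \<Delta>) \<gamma>c)
       \<and> (\<forall>\<gamma>c :: real. Omega k n \<gamma>c = Omega k (n + int \<Delta>) \<gamma>c \<longrightarrow>
             (Omega k n \<gamma>c = 0 \<longleftrightarrow> (even \<Delta> \<and> 2 * n = - int \<Delta>)))
       \<and> (even \<Delta> \<and> 2 * n = - int \<Delta> \<longrightarrow> n + int \<Delta> = - n)"
proof -
  define m where "m = n + int \<Delta>"
  have m0: "m > 0" using assms m_def by simp
  define x where "x = real_of_int n"
  define y where "y = real_of_int m"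
  have x0: "x \<le> -1" using assms x_def by simp
  have y0: "y \<ge> 1" using m0 y_def by simp
  have xy: "x \<noteq> y" using x0 y0 by simp
  have K: "\<And>g. Omega k n g = Omega k m g \<longleftrightarrow> 3 * g\<^sup>2 = k^4 * x * y * (1 - (x\<^sup>2 + x*y + y\<^sup>2))"
    unfolding Omega_def x_def[symmetric] y_def[symmetric]
    using key[OF assms(1)] x0 y0 xy by simp
  have xyneg: "x * y < 0" using x0 y0 by (simp add: mult_neg_pos)
  have s: "x\<^sup>2 + x*y + y\<^sup>2 \<ge> 1"
  proof -
    have "x\<^sup>2 + x*y + y\<^sup>2 = (x + y)\<^sup>2 - x * y" by (simp add: power2_eq_square algebra_simps)
    moreover have "(x+y)\<^sup>2 \<ge> 0" by simp
    moreover have "(-x) * y \<ge> 1 * 1" using x0 y0 by (intro mult_mono) auto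
    ultimately show ?thesis by linarith
  qed
  define R where "R = k^4 * x * y * (1 - (x\<^sup>2 + x*y + y\<^sup>2))"
  have R0: "R \<ge> 0" unfolding R_def
  proof -
    have "x * y * (1 - (x\<^sup>2 + x*y + y\<^sup>2)) \<ge> 0" using xyneg s
      by (simp add: mult_nonpos_nonpos)
    moreover have "k^4 \<ge> 0" by simp
    ultimately have "k^4 * (x * y * (1 - (x\<^sup>2 + x*y + y\<^sup>2))) \<ge> 0"
      using mult_nonneg_nonneg by blast
    then show "k^4 * x * y * (1 - (x\<^sup>2 + x*y + y\<^sup>2)) \<ge> 0"
      by (simp only: mult.assoc)
  qed
  have ex: "\<exists>g. Omega k n g = Omega k m g"
  proof
    show "Omega k n (sqrt (R/3)) = Omega k m (sqrt (R/3))"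
      using K R0 R_def by simp
  qed
  have zero: "Omega k n g = 0 \<longleftrightarrow> m = -n" if "Omega k n g = Omega k m g" for g
  proof -
    have g: "3 * g\<^sup>2 = R" using K that R_def by simp
    have "Omega k n g = k^3 * x * (1 - x\<^sup>2) + 3 * g\<^sup>2 / (k * x)"
      unfolding Omega_def x_def by simp
    also have "\<dots> = k^3 * x * (1 - x\<^sup>2) + R / (k * x)" using g by simp
    also have "\<dots> = k^3 * x * (1 - x\<^sup>2) + k^3 * y * (1 - (x\<^sup>2 + x*y + y\<^sup>2))"
    proof -
      have "R = (k * x) * (k^3 * y * (1 - (x\<^sup>2 + x*y + y\<^sup>2)))"
        unfolding R_def by (simp add: power4_eq_xxxx power3_eq_cube)
      moreover have "k * x \<noteq> 0" using assms(1) x0 by simp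
      ultimately have "R / (k * x) = k^3 * y * (1 - (x\<^sup>2 + x*y + y\<^sup>2))"
        by (metis nonzero_mult_div_cancel_left)
      then show ?thesis by simp
    qed
    also have "\<dots> = k^3 * ((x + y) * (1 - x\<^sup>2 - y\<^sup>2))"
      by (simp add: algebra_simps power2_eq_square)
    finally have e: "Omega k n g = k^3 * ((x + y) * (1 - x\<^sup>2 - y\<^sup>2))" .
    have "(-x)\<^sup>2 \<ge> 1" using x0 by (intro one_le_power) simp
    then have "x\<^sup>2 \<ge> 1" by simp
    moreover have "y\<^sup>2 \<ge> 1" using y0 by (simp add: one_le_power)
    ultimately have "1 - x\<^sup>2 - y\<^sup>2 \<noteq> 0" by simp
    then have "Omega k n g = 0 \<longleftrightarrow> x + y = 0" using e assms(1) by simp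
    also have "\<dots> \<longleftrightarrow> m = -n" unfolding x_def y_def by linarith
    finally show ?thesis .
  qed
  have iff: "(m = -n) \<longleftrightarrow> (even \<Delta> \<and> 2 * n = - int \<Delta>)" unfolding m_def by presburger
  show ?thesis
    using ex zero iff unfolding m_def by simp
qed

end
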